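(* Let $p=k/n$ for a fixed constant $k>0$. Then the average complexity $\mathbb{T}(n,p)$ of exhaustive search for maximum independent set on $G\sim\mathcal{G}(n,p)$ is exponential in $n$.
   Context: $\mathcal{G}(n,p)$ is the binomial random graph on $n$ vertices in which each of the $\binom{n}{2}$ pairs of vertices is an edge with probability $p$, independently. Exhaustive search processes the vertices in a fixed order $v_1,\dots,v_n$ and builds a binary search tree: a node at level $i$ corresponds to a subset $P\subseteq\{v_1,\dots,v_i\}$, and it has the two children $P\cup\{v_{i+1}\}$ and $P$ at level $i+1$; a node is kept (and expanded) only if its subset is an independent set of $G$. $\mathbb{T}(n,p)$ denotes the expected number of nodes of this search tree when $G\sim\mathcal{G}(n,p)$. *)

theory Defs
  imports "HOL-Probability.Probability"
begin

text \<open>Vertices of G(n,p) are 0,...,n-1, processed in this order (v_{i+1} = i).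
  A graph is represented by its edge indicator on unordered pairs, encoded as
  pairs (a,b) with a < b < n.\<close>

definition vertex_pairs :: "nat \<Rightarrow> (nat \<times> nat) set" where
  "vertex_pairs n = {(a, b). a < b \<and> b < n}"

definition random_graph :: "nat \<Rightarrow> real \<Rightarrow> (nat \<times> nat \<Rightarrow> bool) pmf" where
  "random_graph n p = Pi_pmf (vertex_pairs n) False (\<lambda>_. bernoulli_pmf p)"

definition independent_set :: "(nat \<times> nat \<Rightarrow> bool) \<Rightarrow> nat set \<Rightarrow> bool" where
  "independent_set G P \<longleftrightarrow> (\<forall>a\<in>P. \<forall>b\<in>P. a < b \<longrightarrow> \<not> G (a, b))"

text \<open>Nodes of the exhaustive search tree: a node at level i (0 \<le> i \<le> n) is a subset
  P of {v_1,...,v_i} = {0..<i} that is independent in G.\<close>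
definition search_tree_nodes :: "nat \<Rightarrow> (nat \<times> nat \<Rightarrow> bool) \<Rightarrow> (nat \<times> nat set) set" where
  "search_tree_nodes n G = {(i, P). i \<le> n \<and> P \<subseteq> {..<i} \<and> independent_set G P}"

definition avg_complexity :: "nat \<Rightarrow> real \<Rightarrow> real" ("\<T>") where
  "\<T> n p = measure_pmf.expectation (random_graph n p) (\<lambda>G. real (card (search_tree_nodes n G)))"

end

theory Submission imports Defs begin
lemma fin_vp: "finite (vertex_pairs n)"
  by (rule finite_subset[of _ "{..<n}\<times>{..<n}"]) (auto simp: vertex_pairs_def)
lemma card_vp: "card (vertex_pairs m) \<le> m*m"
proof -
  have "card (vertex_pairs m) \<le> card ({..<m}\<times>{..<m})"
    by (rule card_mono) (auto simp: vertex_pairs_def)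
  thus ?thesis by (simp add: card_cartesian_product)
qed
lemma prob_indep:
  assumes "m \<le> n" "0 \<le> p" "p \<le> 1"
  shows "measure_pmf.prob (random_graph n p) {G. \<forall>e\<in>vertex_pairs m. \<not> G e} = (1-p)^card(vertex_pairs m)"
proof -
  define B where "B = (\<lambda>x. if x \<in> vertex_pairs m then {False} else (UNIV::bool set))"
  have sub: "vertex_pairs m \<subseteq> vertex_pairs n" using assms(1) by (auto simp: vertex_pairs_def)
  have "{G. \<forall>e\<in>vertex_pairs m. \<not> G e} = Pi (vertex_pairs n) B"
    using sub by (auto simp: B_def Pi_def)
  hence "measure_pmf.prob (random_graph n p) {G. \<forall>e\<in>vertex_pairs m. \<not> G e}
     = (\<Prod>x\<in>vertex_pairs n. measure_pmf.prob (bernoulli_pmf p) (B x))"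
    unfolding random_graph_def by (simp add: measure_Pi_pmf_Pi fin_vp)
  also have "\<dots> = (\<Prod>x\<in>vertex_pairs n. if x \<in> vertex_pairs m then 1 - p else 1)"
    by (rule prod.cong) (auto simp: B_def measure_pmf_single assms(2,3))
  also have "\<dots> = (1-p)^card(vertex_pairs m)"
    using sub by (simp add: prod.If_cases fin_vp Int_absorb1)
  finally show ?thesis .
qed
lemma card_lb:
  assumes "m \<le> n" "\<forall>e\<in>vertex_pairs m. \<not> G e"
  shows "(2::real)^m \<le> real (card (search_tree_nodes n G))"
proof -
  have fin: "finite (search_tree_nodes n G)"
    by (rule finite_subset[of _ "{..n}\<times>Pow {..<n}"]) (auto simp: search_tree_nodes_def)
  have "(\<lambda>P. (n,P)) ` Pow {..<m} \<subseteq> search_tree_nodes n G"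
    using assms by (auto simp: search_tree_nodes_def independent_set_def vertex_pairs_def)
  hence "card ((\<lambda>P. (n,P)) ` Pow {..<m}) \<le> card (search_tree_nodes n G)"
    using fin by (rule card_mono[rotated])
  moreover have "card ((\<lambda>P. (n,P)) ` Pow {..<m}) = 2^m"
    by (subst card_image) (auto simp: inj_on_def card_Pow)
  ultimately show ?thesis by (metis of_nat_le_iff of_nat_numeral of_nat_power)
qed
lemma exp_lb:
  assumes "m \<le> n" "0 \<le> p" "p \<le> 1"
  shows "(2::real)^m * (1-p)^card(vertex_pairs m) \<le> \<T> n p"
proof -
  define A where "A = {G. \<forall>e\<in>vertex_pairs m. \<not> G e}"
  let ?M = "measure_pmf (random_graph n p)"
  let ?X = "\<lambda>G. real (card (search_tree_nodes n G))"
  have bnd: "?X G \<le> real (card ({..n}\<times>Pow {..<n}))" for G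
    unfolding of_nat_le_iff by (rule card_mono) (auto simp: search_tree_nodes_def)
  have intX: "integrable ?M ?X"
    by (rule measure_pmf.integrable_const_bound[where B="real (card ({..n}\<times>Pow {..<n}))"])
       (use bnd in auto)
  have intI: "integrable ?M (\<lambda>G. (2::real)^m * indicator A G)"
    by (rule measure_pmf.integrable_const_bound[where B="2^m"]) (auto simp: indicator_def)
  have "measure_pmf.expectation (random_graph n p) (\<lambda>G. (2::real)^m * indicator A G)
        \<le> measure_pmf.expectation (random_graph n p) ?X"
  proof (rule integral_mono[OF intI intX])
    fix G show "(2::real)^m * indicator A G \<le> ?X G"
    proof (cases "G \<in> A")
      case True thus ?thesis using card_lb[OF assms(1), of G] by (simp add: A_def)
    qed simp
  qed
  moreover have "measure_pmf.expectation (random_graph n p) (\<lambda>G. (2::real)^m * indicator A G)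
        = 2^m * measure_pmf.prob (random_graph n p) A"
    by simp
  ultimately show ?thesis
    using prob_indep[OF assms] unfolding avg_complexity_def A_def by simp
qed
lemma one_minus_exp:
  assumes "0 \<le> (x::real)" "x \<le> 1/2"
  shows "exp (-2*x) \<le> 1 - x"
proof -
  have "-x - 2*x^2 \<le> ln (1-x)" by (rule ln_one_minus_pos_lower_bound) (use assms in auto)
  moreover have "-2*x \<le> -x - 2*x^2" using assms by (simp add: power2_eq_square) (use mult_right_mono[of "2*x" 1 x] in auto)
  ultimately have "-2*x \<le> ln (1-x)" by linarith
  hence "exp (-2*x) \<le> exp (ln (1-x))" by simp
  thus ?thesis using assms by simp
qed
lemma key:
  assumes k: "k > 0" and e: "e > 0" "e \<le> 1" "e \<le> ln 2/(4*k)"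
    and n: "real n \<ge> 2*k" "real n \<ge> 2/e" "n \<ge> 1"
  shows "exp (e*ln 2/4)^n \<le> \<T> n (k / real n)"
proof -
  define m where "m = nat \<lfloor>e*n\<rfloor>"
  define p where "p = k / real n"
  have npos: "real n > 0" using n by simp
  have f0: "\<lfloor>e*n\<rfloor> \<ge> 0" using e npos by simp
  have rm: "real m = of_int \<lfloor>e*n\<rfloor>" unfolding m_def using f0 by simp
  have m_le: "real m \<le> e*n" unfolding rm by (rule of_int_floor_le)
  have m_ge: "real m \<ge> e*n - 1" unfolding rm by linarith
  have "e*n \<le> n" using e npos by simp
  hence mn: "m \<le> n" using m_le by linarith
  have p0: "0 \<le> p" and p1: "p \<le> 1/2" using k n npos by (auto simp: p_def field_simps)
  have ek: "2*k*e \<le> ln 2/2"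
  proof -
    have "k*e \<le> k*(ln 2/(4*k))" using e k by (intro mult_left_mono) auto
    also have "\<dots> = ln 2/4" using k by simp
    finally show ?thesis by simp
  qed
  have mm: "real m * real m / n \<le> e * m"
  proof -
    have "real m / n \<le> e" using m_le npos by (simp add: divide_le_eq)
    hence "real m * (real m / n) \<le> real m * e" by (intro mult_left_mono) auto
    thus ?thesis by (simp add: mult.commute)
  qed
  have "2 * p * (real m * real m) = 2*k*(real m * real m / n)" by (simp add: p_def)
  also have "\<dots> \<le> 2*k*(e*m)" using mm k by (intro mult_left_mono) auto
  also have "\<dots> = (2*k*e)*m" by simp
  also have "\<dots> \<le> (ln 2/2)*m" using ek by (intro mult_right_mono) auto
  finally have expo: "2 * p * (real m * real m) \<le> ln 2/2 * m" .
  have "exp (e*ln 2/4)^n = exp (e*n*ln 2/4)"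
    by (subst exp_of_nat_mult[symmetric]) (simp add: field_simps)
  also have "\<dots> \<le> exp (m * ln 2 / 2)"
  proof -
    have "e*n \<ge> 2" using n e by (simp add: field_simps)
    hence "e*n*ln 2/4 \<le> (e*n - 1) * ln 2/2" using ln_gt_zero[of 2] by (simp add: field_simps)
    also have "\<dots> \<le> m * ln 2/2" using m_ge ln_gt_zero[of 2] by (intro divide_right_mono mult_right_mono) auto
    finally show ?thesis by simp
  qed
  also have "\<dots> \<le> exp (m * ln 2 - 2*p*(real m*real m))" using expo by (simp add: mult.commute)
  also have "\<dots> = 2^m * exp (-2*p)^(m*m)"
  proof -
    have "exp (real m * ln 2) = 2^m" by (simp add: exp_of_nat_mult)
    thus ?thesis by (simp add: exp_diff exp_of_nat_mult[symmetric] exp_minus field_simps)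
  qed
  also have "\<dots> \<le> 2^m * (1-p)^(m*m)"
    using one_minus_exp[OF p0 p1] by (intro mult_left_mono power_mono) auto
  also have "\<dots> \<le> 2^m * (1-p)^card (vertex_pairs m)"
    using p0 p1 card_vp[of m] by (intro mult_left_mono power_decreasing) auto
  also have "\<dots> \<le> \<T> n p" using exp_lb[OF mn p0] p1 by simp
  finally show ?thesis by (simp add: p_def)
qed

theorem lemma3:
  fixes k :: real
  assumes "k > 0"
  shows "\<exists>c > 1. \<forall>\<^sub>F n in sequentially. \<T> n (k / real n) \<ge> c ^ n"
proof -
  define e where "e = min 1 (ln 2/(4*k))"
  have e: "e > 0" "e \<le> 1" "e \<le> ln 2/(4*k)" using assms by (auto simp: e_def)
  have c: "exp (e*ln 2/4) > 1" using e by simp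
  have "\<forall>\<^sub>F n in sequentially. n \<ge> nat \<lceil>max (2*k) (2/e)\<rceil> + 1"
    by (rule eventually_ge_at_top)
  hence "\<forall>\<^sub>F n in sequentially. \<T> n (k / real n) \<ge> exp (e*ln 2/4) ^ n"
  proof (rule eventually_mono)
    fix n assume h: "n \<ge> nat \<lceil>max (2*k) (2/e)\<rceil> + 1"
    hence "real n \<ge> max (2*k) (2/e)" by linarith
    thus "\<T> n (k / real n) \<ge> exp (e*ln 2/4) ^ n"
      using key[OF assms e] h by auto
  qed
  with c show ?thesis by blast
qed
end
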